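(* Let $\Bbbk$ be a field and let $n,k$ be integers with $1 < k < n$. For each subset $I\subseteq\{0,\ldots,n\}$ of size $k+1$, let $\mathbb{P}^k_I$ be a copy of $\mathbb{P}^k$ with homogeneous coordinates $(x^I_j)_{j\in I}$, and let $U\subset \prod_I \mathbb{P}^k_I$ be the set of points $(P_I)_I$ all of whose coordinates $x^I_j$ are nonzero. Let $V\subseteq U$ be the set of $(P_I)_I\in U$ for which there exists a point $P=(x_0:\cdots:x_n)\in\mathbb{P}^n$ with $P_I = (x_j)_{j\in I}$ (as a point of $\mathbb{P}^k_I$) for every $I$. Let $M_{n,k}$ be the partially specified $\binom{n+1}{k+1}\times(n+1)$ matrix with rows indexed by the subsets $I$ and columns indexed by $j\in\{0,\ldots,n\}$, whose $(I,j)$ entry is $x^I_j$ if $j\in I$ and is unspecified otherwise. Then $V$ is the set of points of $U$ at which all $2\times 2$ minors of $M_{n,k}$ containing no unspecified entries vanish, i.e. the set of $(P_I)_I\in U$ such that \[ x^I_i x^J_j - x^I_j x^J_i = 0 \] for all subsets $I,J$ of size $k+1$ and all $i,j\in I\cap J$.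
   Context: $\mathbb{P}^m$ denotes projective $m$-space over $\Bbbk$, points written in homogeneous coordinates up to a common nonzero scalar. For $I=\{i_0<\cdots<i_k\}$, the projection $\pi_I\colon\mathbb{P}^n\dashrightarrow\mathbb{P}^k$, $(x_0:\cdots:x_n)\mapsto(x_{i_0}:\cdots:x_{i_k})$, is the projection of $\mathbb{P}^n$ onto the coordinate subspace $\langle I\rangle=\{x_j=0 \text{ for } j\notin I\}$; $V$ is the intersection of $U$ with the image of the rational map $\mathbb{P}^n\dashrightarrow\prod_I\mathbb{P}^k_I$ whose components are the $\pi_I$. Geometrically, a point of $U$ is a choice of a point in (the span of) each $k$-dimensional face of the coordinate $n$-simplex, and $V$ is the locus where these are all projections of one point of $\mathbb{P}^n$. *)

theory Defs
  imports Main
begin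

definition faces :: "nat \<Rightarrow> nat \<Rightarrow> nat set set" where
  "faces n k = {I. I \<subseteq> {0..n} \<and> card I = k + 1}"

text \<open>A point (P_I)_I of the product of the P^k_I is given by a family of
  homogeneous coordinate vectors x I :: nat \<Rightarrow> 'a (only the entries x I j with
  j in I matter).\<close>
definition proj_eq :: "nat set \<Rightarrow> (nat \<Rightarrow> 'a::field) \<Rightarrow> (nat \<Rightarrow> 'a) \<Rightarrow> bool" where
  "proj_eq S u v \<longleftrightarrow> (\<exists>c. c \<noteq> 0 \<and> (\<forall>j\<in>S. u j = c * v j))"

text \<open>U: all coordinates x^I_j nonzero (this also makes each x I a valid
  homogeneous coordinate vector, i.e. not identically zero).\<close>
definition U_set :: "nat \<Rightarrow> nat \<Rightarrow> (nat set \<Rightarrow> nat \<Rightarrow> 'a::field) set" where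
  "U_set n k = {x. \<forall>I\<in>faces n k. \<forall>j\<in>I. x I j \<noteq> 0}"

definition V_set :: "nat \<Rightarrow> nat \<Rightarrow> (nat set \<Rightarrow> nat \<Rightarrow> 'a::field) set" where
  "V_set n k = {x \<in> U_set n k. \<exists>p::nat \<Rightarrow> 'a. (\<exists>j\<le>n. p j \<noteq> 0) \<and>
                   (\<forall>I\<in>faces n k. proj_eq I (x I) p)}"

end

theory Submission
  imports Defs
begin

lemma face_ext:
  assumes "A \<subseteq> {0..n}" "card A \<le> k + 1" "k \<le> n"
  shows "\<exists>I\<in>faces n k. A \<subseteq> I"
proof -
  have fA: "finite A" using assms(1) finite_subset by blast
  have "card ({0..n} - A) = n + 1 - card A"
    using assms(1) fA by (simp add: card_Diff_subset)
  hence "k + 1 - card A \<le> card ({0..n} - A)" using assms by simp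
  then obtain B where B: "B \<subseteq> {0..n} - A" "card B = k + 1 - card A"
    using obtain_subset_with_card_n by metis
  have fB: "finite B" using B(1) finite_subset by blast
  have "card (A \<union> B) = card A + card B"
    using B(1) fA fB by (subst card_Un_disjoint) auto
  hence "card (A \<union> B) = k + 1" using B assms by simp
  moreover have "A \<union> B \<subseteq> {0..n}" using B assms by auto
  ultimately show ?thesis unfolding faces_def by blast
qed

theorem mainTheorem2:
  fixes n k :: nat
  assumes "1 < k" and "k < n"
  shows "(V_set n k :: (nat set \<Rightarrow> nat \<Rightarrow> 'a::field) set) =
    {x \<in> U_set n k. \<forall>I\<in>faces n k. \<forall>J\<in>faces n k. \<forall>i\<in>I \<inter> J. \<forall>j\<in>I \<inter> J.
        x I i * x J j - x I j * x J i = 0}"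
proof (intro equalityI subsetI)
  fix x :: "nat set \<Rightarrow> nat \<Rightarrow> 'a"
  assume "x \<in> V_set n k"
  then obtain p where U: "x \<in> U_set n k" and P: "\<forall>I\<in>faces n k. proj_eq I (x I) p"
    unfolding V_set_def by blast
  show "x \<in> {x \<in> U_set n k. \<forall>I\<in>faces n k. \<forall>J\<in>faces n k. \<forall>i\<in>I \<inter> J. \<forall>j\<in>I \<inter> J.
        x I i * x J j - x I j * x J i = 0}"
  proof (safe intro!: U)
    fix I J i j assume "I \<in> faces n k" "J \<in> faces n k" "i \<in> I" "i \<in> J" "j \<in> I" "j \<in> J"
    then obtain c d where "\<forall>j\<in>I. x I j = c * p j" "\<forall>j\<in>J. x J j = d * p j"
      using P unfolding proj_eq_def by meson
    thus "x I i * x J j - x I j * x J i = 0" using \<open>i \<in> I\<close> \<open>i \<in> J\<close> \<open>j \<in> I\<close> \<open>j \<in> J\<close>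
      by (simp add: algebra_simps)
  qed
next
  fix x :: "nat set \<Rightarrow> nat \<Rightarrow> 'a"
  assume "x \<in> {x \<in> U_set n k. \<forall>I\<in>faces n k. \<forall>J\<in>faces n k. \<forall>i\<in>I \<inter> J. \<forall>j\<in>I \<inter> J.
        x I i * x J j - x I j * x J i = 0}"
  hence U: "x \<in> U_set n k" and M: "\<And>I J i j. I \<in> faces n k \<Longrightarrow> J \<in> faces n k \<Longrightarrow>
     i \<in> I \<Longrightarrow> i \<in> J \<Longrightarrow> j \<in> I \<Longrightarrow> j \<in> J \<Longrightarrow> x I i * x J j - x I j * x J i = 0"
    by blast+
  have NZ: "\<And>I j. I \<in> faces n k \<Longrightarrow> j \<in> I \<Longrightarrow> x I j \<noteq> 0" using U unfolding U_set_def by blast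
  have R: "x A i / x A j = x B i / x B j" if "A \<in> faces n k" "B \<in> faces n k"
    "i \<in> A" "i \<in> B" "j \<in> A" "j \<in> B" for A B i j
  proof -
    have "x A i * x B j = x A j * x B i" using M[OF that] by simp
    thus ?thesis using NZ that by (simp add: field_simps)
  qed
  have ext: "\<exists>I\<in>faces n k. A \<subseteq> I" if "A \<subseteq> {0..n}" "card A \<le> k + 1" for A
    using face_ext[OF that] assms by simp
  define F where "F j = (SOME I. I \<in> faces n k \<and> {0, j} \<subseteq> I)" for j
  have F: "F j \<in> faces n k \<and> {0, j} \<subseteq> F j" if "j \<le> n" for j
  proof -
    have "card {0, j} \<le> k + 1" using assms by (simp add: card_insert_if)
    moreover have "{0, j} \<subseteq> {0..n}" using that by auto
    ultimately obtain I where "I \<in> faces n k" "{0, j} \<subseteq> I" using ext[of "{0,j}"] by blast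
    hence "I \<in> faces n k \<and> {0, j} \<subseteq> I" by blast
    thus ?thesis unfolding F_def by (rule someI)
  qed
  define p where "p j = x (F j) j / x (F j) 0" for j
  have faceI: "I \<subseteq> {0..n}" if "I \<in> faces n k" for I using that unfolding faces_def by blast
  have pnz: "p j \<noteq> 0" if "j \<le> n" for j using F[OF that] NZ unfolding p_def by auto
  have cross: "x I j * p j' = x I j' * p j" if I: "I \<in> faces n k" "j \<in> I" "j' \<in> I" for I j j'
  proof -
    have jn: "j \<le> n" "j' \<le> n" using faceI[OF I(1)] I(2,3) by auto
    have "card {0, j, j'} \<le> 3" by (simp add: card_insert_if)
    hence "card {0, j, j'} \<le> k + 1" using assms by simp
    moreover have "{0, j, j'} \<subseteq> {0..n}" using jn by auto
    ultimately obtain G where G: "G \<in> faces n k" "{0, j, j'} \<subseteq> G" using ext[of "{0,j,j'}"] by blast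
    have Fj: "F j \<in> faces n k" "{0, j} \<subseteq> F j" and Fj': "F j' \<in> faces n k" "{0, j'} \<subseteq> F j'"
      using F jn by auto
    have e1: "x I j / x I j' = x G j / x G j'" using R[OF I(1) G(1)] I G by auto
    have e2: "p j' = x G j' / x G 0" unfolding p_def using R[OF Fj'(1) G(1)] Fj' G by auto
    have e3: "p j = x G j / x G 0" unfolding p_def using R[OF Fj(1) G(1)] Fj G by auto
    have nz: "x I j' \<noteq> 0" "x G j' \<noteq> 0" "x G 0 \<noteq> 0" "x I j \<noteq> 0" "x G j \<noteq> 0"
      using NZ I G by auto
    have a: "x G j' * x I j = x G j * x I j'" using e1 nz by (simp add: field_simps)
    have e2': "p j' * x G 0 = x G j'" using e2 nz by simp
    have e3': "p j * x G 0 = x G j" using e3 nz by simp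
    have "(p j' * x I j) * x G 0 = (p j' * x G 0) * x I j" by (simp add: ac_simps)
    also have "\<dots> = x G j * x I j'" using e2' a by simp
    also have "\<dots> = (p j * x I j') * x G 0" using e3' by (simp add: ac_simps)
    finally have "(p j' * x I j) * x G 0 = (p j * x I j') * x G 0" .
    hence "p j' * x I j = p j * x I j'" using nz by simp
    thus ?thesis by (simp add: mult.commute)
  qed
  show "x \<in> V_set n k" unfolding V_set_def
  proof (intro CollectI conjI U)
    show "\<exists>p. (\<exists>j\<le>n. p j \<noteq> 0) \<and> (\<forall>I\<in>faces n k. proj_eq I (x I) p)"
    proof (intro exI[of _ p] conjI ballI)
      show "\<exists>j\<le>n. p j \<noteq> 0" using pnz by auto
    next
      fix I assume I: "I \<in> faces n k"
      have "card I = k + 1" using I unfolding faces_def by simp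
      hence "I \<noteq> {}" by auto
      then obtain j0 where j0: "j0 \<in> I" by auto
      have j0n: "j0 \<le> n" using faceI[OF I] j0 by auto
      show "proj_eq I (x I) p" unfolding proj_eq_def
      proof (intro exI conjI ballI)
        show "x I j0 / p j0 \<noteq> 0" using NZ I j0 pnz j0n by simp
      next
        fix j assume "j \<in> I"
        thus "x I j = x I j0 / p j0 * p j" using cross[OF I \<open>j \<in> I\<close> j0] pnz[OF j0n]
          by (simp add: field_simps)
      qed
    qed
  qed
qed

end
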